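(* Fix an integer base $b \ge 2$ and a function $f_*:\{0,1,\dots,b-1\}\to\mathbb{Z}^{\ge 0}$ with $f_*(0)=0$, $f_*(1)=1$ and $\gcd(b,f_*(b-1))=1$. Let $f:\mathbb{Z}^{\ge 0}\to\mathbb{Z}^{\ge 0}$ be the associated digit map, $f\left(\sum_{i=0}^n a_i b^i\right)=\sum_{i=0}^n f_*(a_i)$, where $\sum_{i=0}^n a_ib^i$ is the base-$b$ representation ($0\le a_i\le b-1$). Suppose there is a digit $0\le m_*\le b-1$ such that $f(m_* )-m_*$ is relatively prime to $f(b-1)$. Then for any cycle number $u$ and any positive integer $n$, there exist $n$ consecutive positive integers that are all $u$-integers.
   Context: $f^r$ denotes the $r$-fold iterate of $f$. A cycle number is a positive integer $u$ with $f^r(u)=u$ for some $r\ge 1$. For a cycle number $u$, a positive integer $n$ is a $u$-integer if $f^r(n)=u$ for some $r\ge 1$. *)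

theory Defs
  imports Main
begin

fun digit_map :: "nat \<Rightarrow> (nat \<Rightarrow> nat) \<Rightarrow> nat \<Rightarrow> nat" where
  "digit_map b fs n = (if n = 0 \<or> b < 2 then 0 else fs (n mod b) + digit_map b fs (n div b))"

definition cycle_number :: "(nat \<Rightarrow> nat) \<Rightarrow> nat \<Rightarrow> bool" where
  "cycle_number f u \<longleftrightarrow> u > 0 \<and> (\<exists>r\<ge>1. (f ^^ r) u = u)"

definition u_integer :: "(nat \<Rightarrow> nat) \<Rightarrow> nat \<Rightarrow> nat \<Rightarrow> bool" where
  "u_integer f u n \<longleftrightarrow> n > 0 \<and> (\<exists>r\<ge>1. (f ^^ r) n = u)"

end

theory Submission
  imports Defs "HOL-Number_Theory.Number_Theory"
begin

fun rep :: "nat \<Rightarrow> nat \<Rightarrow> nat \<Rightarrow> nat \<Rightarrow> nat" where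
  "rep B K e 0 = 0"
| "rep B K e (Suc t) = rep B K e t * B^K + e"

declare digit_map.simps[simp del]

locale dm =
  fixes b :: nat and fs :: "nat \<Rightarrow> nat"
  assumes b2: "b \<ge> 2" and fs0: "fs 0 = 0" and fs1: "fs 1 = 1"
begin

abbreviation f where "f \<equiv> digit_map b fs"

lemma f_zero[simp]: "f 0 = 0" by (subst digit_map.simps) simp

lemma fB: assumes "e < b" shows "f (z*b + e) = fs e + f z"
proof (cases "z*b+e = 0")
  case True then have "z = 0" "e = 0" using b2 by auto
  then show ?thesis using fs0 by (simp add: digit_map.simps)
next
  case False
  have "f (z*b+e) = fs ((z*b+e) mod b) + f ((z*b+e) div b)"
    using False b2 by (subst digit_map.simps) auto
  also have "(z*b+e) mod b = e" using assms by simp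
  also have "(z*b+e) div b = z" using assms by simp
  finally show ?thesis .
qed

lemma f_digit: "e < b \<Longrightarrow> f e = fs e" using fB[of e 0] by simp


lemma fA: "y < b^L \<Longrightarrow> f (x*b^L + y) = f x + f y"
proof (induction L arbitrary: y)
  case 0 then show ?case by simp
next
  case (Suc L)
  define y' where "y' = y div b"
  define e where "e = y mod b"
  have y: "y = y'*b + e" by (simp add: y'_def e_def)
  have e: "e < b" using b2 by (simp add: e_def)
  have y': "y' < b^L" unfolding y'_def
    using Suc.prems by (simp add: less_mult_imp_div_less mult.commute)
  have "x*b^Suc L + y = (x*b^L + y')*b + e" by (simp add: y algebra_simps)
  then have "f (x*b^Suc L + y) = fs e + f (x*b^L + y')" using fB[OF e] by simp
  also have "\<dots> = fs e + f x + f y'" using Suc.IH[OF y'] by simp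
  also have "f y = fs e + f y'" using fB[OF e] y by simp
  ultimately show ?case by simp
qed

lemma b_pos: "b > 0" using b2 by simp

lemma self_less_pow: "n < b^n"
proof -
  have "n < 2^n" by (rule less_exp)
  also have "2^n \<le> b^n" using b2 by (simp add: power_mono)
  finally show ?thesis .
qed

lemma fpow_minus1: "f (b^j - 1) = j * fs (b-1)"
proof (induction j)
  case 0 then show ?case by simp
next
  case (Suc j)
  have "b^j \<ge> 1" using b_pos by simp
  then have eq: "b^Suc j - 1 = (b^j - 1)*b + (b - 1)" using b2
    by (simp add: algebra_simps diff_mult_distrib)
  have "f ((b^j - 1)*b + (b-1)) = fs (b-1) + f (b^j - 1)" by (rule fB) (use b2 in simp)
  then have "f (b^Suc j - 1) = fs (b-1) + j * fs (b-1)" by (simp only: eq Suc)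
  then show ?case by simp
qed

lemma f1: "f 1 = 1" using f_digit[of 1] b2 fs1 by simp

lemma fpow: "f (b^L) = 1" using fA[of 0 L 1] f1 b_pos by simp

lemma f_rep: "K \<ge> 1 \<Longrightarrow> e < b \<Longrightarrow> f (rep b K e t) = t * fs e"
proof (induction t)
  case 0 then show ?case by simp
next
  case (Suc t)
  have "b \<le> b^K" using Suc.prems b2
    by (metis One_nat_def le_less less_one not_less power_increasing power_one_right zero_less_numeral)
  then have "e < b^K" using Suc.prems by simp
  then show ?case using fA[of e K "rep b K e t"] f_digit[of e] Suc by simp
qed

lemma rep_less: "K \<ge> 1 \<Longrightarrow> e < b \<Longrightarrow> rep b K e t < b^(K*t)"
proof (induction t)
  case 0 then show ?case by simp
next
  case (Suc t)
  have "b \<le> b^K" using Suc.prems b2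
    by (metis One_nat_def le_less less_one not_less power_increasing power_one_right zero_less_numeral)
  then have "e < b^K" using Suc.prems by simp
  then have "rep b K e t * b^K + e < (rep b K e t + 1) * b^K" by simp
  also have "\<dots> \<le> b^(K*t) * b^K" using Suc by (intro mult_le_mono1) simp
  also have "\<dots> = b^(K * Suc t)" by (simp add: power_add algebra_simps)
  finally show ?case by simp
qed


lemma dvd_pow_minus1: "(n::int) dvd a - 1 \<Longrightarrow> n dvd a^t - 1"
proof (induction t)
  case 0 then show ?case by simp
next
  case (Suc t)
  have "a^Suc t - 1 = a*(a^t - 1) + (a - 1)" by (simp add: algebra_simps)
  then show ?case using Suc by (metis dvd_add dvd_mult)
qed

lemma rep_dvd:
  assumes "(n::int) dvd int (b^K) - 1"
  shows "n dvd int (rep b K e t) - int t * int e"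
proof (induction t)
  case 0 then show ?case by simp
next
  case (Suc t)
  have "int (rep b K e (Suc t)) - int (Suc t) * int e
      = (int (rep b K e t) - int t * int e) * int (b^K) + int t * int e * (int (b^K) - 1)"
    by (simp add: algebra_simps)
  then show ?case using Suc assms by simp
qed

definition good :: "nat \<Rightarrow> nat set \<Rightarrow> bool" where
  "good u C \<longleftrightarrow> (\<exists>y>0. \<forall>c\<in>C. u_integer f u (y + c))"

lemma exists_big: "finite (C::nat set) \<Longrightarrow> \<exists>L. \<forall>c\<in>C. c + d < b^L"
proof -
  assume "finite C"
  define L where "L = Max (insert 0 C) + d"
  have "\<forall>c\<in>C. c + d \<le> L" unfolding L_def using \<open>finite C\<close> by auto
  moreover have "L < b^L" by (rule self_less_pow)
  ultimately show ?thesis by (meson le_less_trans)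
qed

lemma good_step:
  assumes fin: "finite C" and g: "good u ((\<lambda>x. f (x + d)) ` C)"
  shows "good u C"
proof -
  obtain y' where y': "y' > 0" "\<forall>c\<in>C. u_integer f u (y' + f (c + d))"
    using g unfolding good_def by auto
  define X where "X = rep b 1 1 y'"
  have fX: "f X = y'" unfolding X_def using f_rep[of 1 1 y'] b2 fs1 by simp
  have X0: "X > 0" using fX y' by (metis gr0I f_zero less_irrefl)
  obtain L where L: "\<forall>c\<in>C. c + d < b^L" using exists_big[OF fin] by blast
  define y where "y = X*b^L + d"
  have y0: "y > 0" unfolding y_def using X0 b_pos by simp
  have "\<forall>c\<in>C. u_integer f u (y + c)"
  proof
    fix c assume c: "c \<in> C"
    have "y + c = X*b^L + (c + d)" by (simp add: y_def)
    then have "f (y + c) = f X + f (c + d)" using fA[of "c+d" L X] L c by (simp only:)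
    then have fy: "f (y + c) = y' + f (c + d)" using fX by simp
    obtain r where r: "r \<ge> 1" "(f ^^ r) (y' + f (c + d)) = u"
      using y'(2) c unfolding u_integer_def by blast
    have "(f ^^ Suc r) (y + c) = u" using r fy by (simp add: funpow_Suc_right del: funpow.simps)
    then show "u_integer f u (y + c)" unfolding u_integer_def using y0 by (intro conjI exI[of _ "Suc r"]) auto
  qed
  then show ?thesis unfolding good_def using y0 by blast
qed

lemma good_single:
  assumes u: "u > 0" and C: "C \<subseteq> {v}"
  shows "good u C"
proof -
  define X where "X = rep b 1 1 u"
  have fX: "f X = u" unfolding X_def using f_rep[of 1 1 u] b2 fs1 by simp
  have X0: "X \<ge> 1" using fX u by (metis f_zero less_one not_less neq0_conv)
  define w where "w = X * b^(v+1)"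
  have "v < b^(v+1)" using self_less_pow[of "v+1"] by simp
  also have "\<dots> \<le> w" unfolding w_def using X0 by simp
  finally have vw: "v < w" .
  have fw: "f w = u" unfolding w_def using fA[of 0 "v+1" X] fX b_pos by simp
  have "u_integer f u w" unfolding u_integer_def using vw fw by (intro conjI exI[of _ 1]) auto
  then have "\<forall>c\<in>C. u_integer f u ((w - v) + c)" using C vw by auto
  then show ?thesis unfolding good_def using vw by (intro exI[of _ "w - v"]) auto
qed

inductive opc :: "(nat \<Rightarrow> nat) \<Rightarrow> bool" where
  opc_id: "opc id"
| opc_step: "opc g \<Longrightarrow> opc ((\<lambda>x. f (x + d)) \<circ> g)"

lemma opc_comp: "opc g \<Longrightarrow> opc h \<Longrightarrow> opc (g \<circ> h)"
proof (induction rule: opc.induct)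
  case opc_id then show ?case by simp
next
  case (opc_step g d)
  show ?case unfolding comp_assoc by (rule opc.opc_step) (rule opc_step.IH[OF opc_step.prems])
qed

lemma opc_good: "opc g \<Longrightarrow> finite C \<Longrightarrow> good u (g ` C) \<Longrightarrow> good u C"
proof (induction arbitrary: C rule: opc.induct)
  case opc_id then show ?case by simp
next
  case (opc_step g d)
  have "good u ((\<lambda>x. f (x + d)) ` (g ` C))" using opc_step.prems by (simp add: image_comp)
  then have "good u (g ` C)" using good_step opc_step.prems by blast
  then show ?case using opc_step.IH opc_step.prems by blast
qed

end

locale dm2 = dm +
  fixes F
  defines "F \<equiv> fs (b - 1)"
  assumes cop: "coprime b F"
    and hm: "\<exists>m<b. coprime (int (fs m) - int m) (int F)"
begin

lemma pair_lt:
  assumes pq: "p < q"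
  shows "\<exists>g. opc g \<and> g p = g q"
proof -
  define D where "D = q - p"
  have D1: "D \<ge> 1" and qD: "q = p + D" using pq by (auto simp: D_def)
  have F0: "F \<noteq> 0"
  proof
    assume "F = 0" then have "b = 1" using cop by simp
    then show False using b2 by simp
  qed
  then have F1: "F \<ge> 1" by simp
  define K where "K = totient F"
  have K1: "K \<ge> 1" using F1 by (simp add: K_def Suc_le_eq)
  have hK: "int F dvd int (b^K) - 1"
    using euler_theorem[OF cop] unfolding K_def
    by (metis cong_iff_dvd_diff cong_int_iff of_nat_1)
  have hKt: "int F dvd int (b^(K*t)) - 1" for t
  proof -
    have "int F dvd (int (b^K))^t - 1" by (rule dvd_pow_minus1[OF hK])
    then show ?thesis by (simp add: power_mult)
  qed
  obtain m where m: "m < b" "coprime (int (fs m) - int m) (int F)" using hm by blast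
  obtain x where x: "[(int (fs m) - int m) * x = 1] (mod int F)"
    using cong_solve_coprime_int[OF m(2)] by blast
  define \<delta> where "\<delta> = int (fs m) - int m"
  define c where "c = f (b^D - D)"
  define t2 where "t2 = nat ((x * (1 - int c)) mod int F)"
  have t2: "int t2 = (x * (1 - int c)) mod int F" unfolding t2_def using F1 by simp
  have ct2: "int F dvd \<delta> * int t2 - (1 - int c)"
  proof -
    have a: "int F dvd int t2 - x * (1 - int c)" unfolding t2
      by (metis mod_eq_dvd_iff mod_mod_trivial)
    have b: "int F dvd \<delta> * x - 1" using x unfolding \<delta>_def by (simp add: cong_iff_dvd_diff)
    have "\<delta> * int t2 - (1 - int c) = \<delta> * (int t2 - x * (1 - int c)) + (\<delta> * x - 1) * (1 - int c)"
      by (simp add: algebra_simps)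
    then show ?thesis using a b by (metis dvd_add dvd_mult dvd_mult2)
  qed
  define j where "j = 2 + t2 * fs m + F*(D+p) + c"
  define L where "L = K*j"
  have Lj: "j \<le> L" unfolding L_def using K1 by simp
  have bL: "j < b^L" using self_less_pow[of L] Lj by simp
  define t1 where "t1 = L*F - t2*fs m"
  have LF: "L \<le> L*F" using F1 by simp
  have tle: "t2*fs m + 2 \<le> L*F" using Lj LF unfolding j_def by linarith
  have t1eq: "t1 + t2*fs m = L*F" unfolding t1_def using tle by simp
  have t1: "t1 \<ge> 2" unfolding t1_def using tle by simp
  define R1 where "R1 = rep b K 1 t1"
  define R2 where "R2 = rep b K m t2"
  define M where "M = R1 * b^(K*t2) + R2"
  have R2less: "R2 < b^(K*t2)" unfolding R2_def by (rule rep_less[OF K1 m(1)])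
  have fM: "f M = L*F"
  proof -
    have "f M = f R1 + f R2" unfolding M_def by (rule fA[OF R2less])
    also have "f R1 = t1" unfolding R1_def using f_rep[OF K1, of 1 t1] b2 fs1 by simp
    also have "f R2 = t2 * fs m" unfolding R2_def using f_rep[OF K1 m(1)] by simp
    finally show ?thesis using t1eq by simp
  qed
  have R1ge: "R1 \<ge> 2"
  proof -
    obtain s where s: "t1 = Suc (Suc s)" using t1 by (metis add_2_eq_Suc le_Suc_ex)
    have "rep b K 1 (Suc s) \<ge> 1" by simp
    moreover have "b^K \<ge> 1" using b_pos by simp
    ultimately have "rep b K 1 (Suc s) * b^K \<ge> 1" by (simp add: Suc_le_eq)
    then show ?thesis unfolding R1_def s by simp
  qed
  have M2: "M \<ge> 2"
  proof -
    have "b^(K*t2) \<ge> 1" using b_pos by simp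
    then have "R1 * b^(K*t2) \<ge> 2" using R1ge by (metis mult_le_mono nat_mult_1_right)
    then show ?thesis unfolding M_def by simp
  qed
  have Mc: "int F dvd int M - (int t1 + int t2 * int m)"
  proof -
    have r1: "int F dvd int R1 - int t1 * int 1" unfolding R1_def by (rule rep_dvd[OF hK])
    have r2: "int F dvd int R2 - int t2 * int m" unfolding R2_def by (rule rep_dvd[OF hK])
    have "int M - (int t1 + int t2 * int m)
       = int R1 * (int (b^(K*t2)) - 1) + (int R1 - int t1 * int 1) + (int R2 - int t2 * int m)"
      unfolding M_def by (simp add: algebra_simps)
    then show ?thesis using r1 r2 hKt[of t2] by (metis dvd_add dvd_mult)
  qed
  have Mc2: "int F dvd int M + 1 - int c"
  proof -
    have e1: "int t1 + int t2 * int (fs m) = int L * int F" using t1eq by (metis of_nat_add of_nat_mult)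
    have "int M + 1 - int c = (int M - (int t1 + int t2 * int m)) + int L * int F
          - (\<delta> * int t2 - (1 - int c))"
      using e1 unfolding \<delta>_def by (simp add: algebra_simps)
    then show ?thesis using Mc ct2 by (metis dvd_add dvd_diff dvd_triv_right)
  qed
  have bLge: "b^L \<ge> 1" using b_pos by simp
  have MbL: "(M-1)*b^L \<ge> b^L" using mult_le_mono1[of 1 "M-1" "b^L"] M2 by auto
  define E where "E = (M-1)*b^L + 2 - c"
  have cE: "c \<le> (M-1)*b^L + 2" using bL MbL unfolding j_def by linarith
  have EF: "F dvd E"
  proof -
    have "int E = (int M - 1) * int (b^L) + 2 - int c" unfolding E_def using cE M2
      by (simp add: of_nat_diff)
    also have "\<dots> = (int M - 1) * (int (b^L) - 1) + (int M + 1 - int c)" by (simp add: algebra_simps)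
    finally have "int F dvd int E" using hKt[of j] Mc2 unfolding L_def by (metis dvd_add dvd_mult)
    then show ?thesis by simp
  qed
  have Ebig: "F*(D+p) \<le> E" unfolding E_def using bL MbL unfolding j_def by linarith
  have EdivF: "D + p \<le> E div F"
  proof -
    have "(F*(D+p)) div F \<le> E div F" using Ebig by (rule div_le_mono)
    then show ?thesis using F1 by simp
  qed
  define L' where "L' = D + E div F"
  have A: "(L' - D)*F + c = (M-1)*b^L + 2"
    unfolding L'_def using EF cE E_def by simp
  have bL': "D + p < b^L'" using self_less_pow[of L'] EdivF unfolding L'_def by simp
  define d1 where "d1 = b^L' - D - p"
  define d2 where "d2 = b^L - 2"
  have s1p: "f (p + d1) = (L'-D)*F + c"
  proof -
    have pd: "p + d1 = b^L' - D" unfolding d1_def using bL' by simp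
    have bD: "D < b^D" by (rule self_less_pow)
    have X1: "b^(L'-D) \<ge> 1" using b_pos by simp
    have split: "b^L' = b^(L'-D) * b^D" unfolding L'_def by (simp add: power_add[symmetric] add.commute)
    have "b^L' - D = (b^(L'-D) - 1) * b^D + (b^D - D)"
    proof -
      have "b^(L'-D) * b^D = (b^(L'-D) - 1) * b^D + b^D" using X1
        by (metis add.commute le_add_diff_inverse mult.commute mult_Suc_right plus_1_eq_Suc)
      then show ?thesis using split bD by simp
    qed
    moreover have "b^D - D < b^D" using D1 bD by simp
    ultimately have "f (b^L' - D) = f (b^(L'-D) - 1) + f (b^D - D)" using fA by simp
    then show ?thesis using pd fpow_minus1 c_def F_def by simp
  qed
  have s1q: "f (q + d1) = 1"
  proof -
    have "q + d1 = b^L'" unfolding d1_def qD using bL' by simp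
    then show ?thesis using fpow by simp
  qed
  have bL2: "b^L \<ge> 2" using bL j_def by simp
  have s2a: "f (1 + d2) = L*F"
  proof -
    have "1 + d2 = b^L - 1" unfolding d2_def using bL2 by simp
    then show ?thesis using fpow_minus1 F_def by simp
  qed
  have s2b: "f ((L'-D)*F + c + d2) = L*F"
  proof -
    have e: "(M-1)*b^L = M*b^L - b^L" by (simp add: diff_mult_distrib)
    have "b^L \<le> M*b^L" using M2 by simp
    then have "(L'-D)*F + c + d2 = M * b^L + 0" unfolding A d2_def using e bL2 by linarith
    then have "f ((L'-D)*F + c + d2) = f M + f 0" using fA[of 0 L M] b_pos by simp
    then show ?thesis using fM by simp
  qed
  define g where "g = (\<lambda>x. f (x + d2)) \<circ> ((\<lambda>x. f (x + d1)) \<circ> id)"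
  have "opc g" unfolding g_def by (intro opc.intros)
  moreover have "g p = g q"
  proof -
    have "g p = f (f (p + d1) + d2)" by (simp add: g_def)
    also have "\<dots> = L*F" by (simp only: s1p s2b)
    also have "\<dots> = f (f (q + d1) + d2)" by (simp only: s1q s2a)
    also have "\<dots> = g q" by (simp add: g_def)
    finally show ?thesis .
  qed
  ultimately show ?thesis by (intro exI[of _ g] conjI)
qed

lemma pair: "\<exists>g. opc g \<and> g p = g q"
proof (cases p q rule: linorder_cases)
  case less then show ?thesis using pair_lt by blast
next
  case equal then show ?thesis using opc_id by blast
next
  case greater
  then obtain g where "opc g" "g q = g p" using pair_lt[of q p] by blast
  then show ?thesis by (intro exI[of _ g]) simp
qed

lemma collapse: "finite C \<Longrightarrow> \<exists>g v. opc g \<and> g ` C \<subseteq> {v}"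
proof (induction rule: finite_induct)
  case empty then show ?case using opc_id by blast
next
  case (insert x C)
  then obtain g v where g: "opc g" "g ` C \<subseteq> {v}" by blast
  obtain h where h: "opc h" "h (g x) = h v" using pair by blast
  have "opc (h \<circ> g)" using opc_comp h g by blast
  moreover have "(h \<circ> g) ` insert x C \<subseteq> {h v}" using g h by auto
  ultimately show ?case by blast
qed

lemma good_all: assumes "u > 0" "finite C" shows "good u C"
proof -
  obtain g v where gv: "opc g" "g ` C \<subseteq> {v}" using collapse[OF assms(2)] by blast
  have "good u (g ` C)" by (rule good_single[OF assms(1) gv(2)])
  then show ?thesis using opc_good[OF gv(1) assms(2)] by simp
qed

end

theorem theorem1p1:
  fixes b :: nat and fs :: "nat \<Rightarrow> nat" and u n :: nat
  assumes hb: "b \<ge> 2"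
    and h0: "fs 0 = 0" and h1: "fs 1 = 1"
    and hgcd: "coprime b (fs (b - 1))"
    and hm: "\<exists>m<b. coprime (int (digit_map b fs m) - int m) (int (digit_map b fs (b - 1)))"
    and hu: "cycle_number (digit_map b fs) u"
    and hn: "n > 0"
  shows "\<exists>k>0. \<forall>i<n. u_integer (digit_map b fs) u (k + i)"
proof -
  interpret dm b fs using hb h0 h1 by unfold_locales
  have hm': "\<exists>m<b. coprime (int (fs m) - int m) (int (fs (b - 1)))"
  proof -
    obtain m where m: "m < b" "coprime (int (digit_map b fs m) - int m) (int (digit_map b fs (b - 1)))"
      using hm by blast
    have "b - 1 < b" using hb by simp
    then have "digit_map b fs (b - 1) = fs (b - 1)" by (rule f_digit)
    moreover have "digit_map b fs m = fs m" using m(1) by (rule f_digit)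
    ultimately show ?thesis using m by (intro exI[of _ m]) simp
  qed
  interpret dm2 b fs "fs (b - 1)" using hgcd hm' by unfold_locales auto
  have "u > 0" using hu unfolding cycle_number_def by simp
  then have "good u {0..<n}" by (rule good_all) simp
  then show ?thesis unfolding good_def by auto
qed

end
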